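(* Let $B\subset\mathbb{R}$ be a measurable set with Lebesgue measure $|B|=m\in(0,\infty)$, let $n\in\mathbb{N}$ and let $0<\delta<m/n$. Then there exist $x_1,\dots,x_{n+1}\in B$ such that $|x_i-x_j|/\delta\in\mathbb{N}=\{1,2,\dots\}$ for all $i\ne j$. *)

theory Defs
  imports "HOL-Analysis.Analysis"
begin

end

theory Submission
  imports Defs
begin

lemma shift_meas:
  assumes B: "B \<in> sets lebesgue"
  shows "(\<lambda>x::real. indicator B (t + x) :: ennreal) \<in> borel_measurable lebesgue"
proof -
  have "(\<lambda>x::real. t + 1 * x) \<in> lebesgue \<rightarrow>\<^sub>M lebesgue"
    using lebesgue_affine_measurable[where c="\<lambda>_::real. 1" and t=t] by simp
  then have "(\<lambda>x::real. t + x) \<in> lebesgue \<rightarrow>\<^sub>M lebesgue" by simp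
  moreover have "(indicator B :: real \<Rightarrow> ennreal) \<in> borel_measurable lebesgue"
    using B by simp
  ultimately show ?thesis using measurable_compose by (metis (no_types) comp_def measurable_comp)
qed

lemma strip_emeasure:
  fixes \<delta> :: real and k :: int
  assumes B: "B \<in> sets lebesgue" and d: "0 < \<delta>"
  shows "emeasure lebesgue (B \<inter> {of_int k*\<delta>..<(of_int k+1)*\<delta>}) =
     (\<integral>\<^sup>+x. indicator B (of_int k*\<delta> + x) * indicator {0..<\<delta>} x \<partial>lebesgue)"
proof -
  let ?S = "B \<inter> {of_int k*\<delta>..<(of_int k+1)*\<delta>}"
  have Sm: "?S \<in> sets lebesgue" using B by (intro sets.Int) auto
  have "emeasure lebesgue ?S = (\<integral>\<^sup>+x. indicator ?S x \<partial>lebesgue)"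
    using Sm by (simp add: nn_integral_indicator)
  also have "\<dots> = ennreal \<bar>1\<bar> * (\<integral>\<^sup>+x. indicator ?S (of_int k*\<delta> + 1 * x) \<partial>lebesgue)"
    by (rule nn_integral_real_affine_lebesgue) (use Sm in auto)
  also have "\<dots> = (\<integral>\<^sup>+x. indicator ?S (of_int k*\<delta> + 1 * x) \<partial>lebesgue)"
    by (simp only: abs_one ennreal_1 mult_1)
  also have "\<dots> = (\<integral>\<^sup>+x. indicator B (of_int k*\<delta> + x) * indicator {0..<\<delta>} x \<partial>lebesgue)"
    by (rule nn_integral_cong) (auto simp: indicator_def algebra_simps)
  finally show ?thesis .
qed

lemma pigeon:
  fixes K :: "int set" and \<delta> :: real
  assumes B: "B \<in> sets lebesgue" and d: "0 < \<delta>" and K: "finite K"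
    and big: "(\<Sum>k\<in>K. emeasure lebesgue (B \<inter> {of_int k*\<delta>..<(of_int k+1)*\<delta>})) > ennreal (real n * \<delta>)"
  shows "\<exists>y. n + 1 \<le> card {k\<in>K. of_int k*\<delta> + y \<in> B}"
proof (rule ccontr)
  assume "\<not> ?thesis"
  then have le: "card {k\<in>K. of_int k*\<delta> + y \<in> B} \<le> n" for y by (metis not_less_eq_eq Suc_eq_plus1)
  have "(\<Sum>k\<in>K. emeasure lebesgue (B \<inter> {of_int k*\<delta>..<(of_int k+1)*\<delta>}))
     = (\<Sum>k\<in>K. \<integral>\<^sup>+x. indicator B (of_int k*\<delta> + x) * indicator {0..<\<delta>} x \<partial>lebesgue)"
    using strip_emeasure[OF B d] by simp
  also have "\<dots> = (\<integral>\<^sup>+x. (\<Sum>k\<in>K. indicator B (of_int k*\<delta> + x) * indicator {0..<\<delta>} x) \<partial>lebesgue)"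
    by (rule nn_integral_sum[symmetric]) (use shift_meas[OF B] in \<open>intro borel_measurable_times_ennreal; auto intro: measurable_completion\<close>)
  also have "\<dots> \<le> (\<integral>\<^sup>+x. of_nat n * indicator {0..<\<delta>} x \<partial>lebesgue)"
  proof (rule nn_integral_mono)
    fix x :: real
    have "(\<Sum>k\<in>K. indicator B (of_int k*\<delta> + x) * indicator {0..<\<delta>} x :: ennreal)
        = (\<Sum>k\<in>K. indicator B (of_int k*\<delta> + x)) * indicator {0..<\<delta>} x"
      by (simp add: sum_distrib_right)
    also have "(\<Sum>k\<in>K. indicator B (of_int k*\<delta> + x) :: ennreal) = of_nat (card {k\<in>K. of_int k*\<delta> + x \<in> B})"
      using K by (simp add: indicator_def sum.If_cases Int_def conj_commute)
    also have "of_nat (card {k\<in>K. of_int k*\<delta> + x \<in> B}) * indicator {0..<\<delta>} x \<le> (of_nat n * indicator {0..<\<delta>} x :: ennreal)"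
      using le[of x] by (intro mult_right_mono) auto
    finally show "(\<Sum>k\<in>K. indicator B (of_int k*\<delta> + x) * indicator {0..<\<delta>} x :: ennreal) \<le> of_nat n * indicator {0..<\<delta>} x" .
  qed
  also have "\<dots> = of_nat n * ennreal \<delta>"
    using d by (subst nn_integral_cmult_indicator) auto
  also have "\<dots> = ennreal (real n * \<delta>)"
    using d by (simp add: ennreal_mult' ennreal_of_nat_eq_real_of_nat)
  finally show False using big by simp
qed

lemma strips_union:
  fixes \<delta> :: real and N :: nat
  assumes d: "0 < \<delta>"
  shows "(\<Union>k\<in>{-int N..<int N}. {of_int k*\<delta>..<(of_int k+1)*\<delta>}) = {-(real N*\<delta>)..<real N*\<delta>}"
proof (intro equalityI subsetI)
  fix x assume "x \<in> (\<Union>k\<in>{-int N..<int N}. {of_int k*\<delta>..<(of_int k+1)*\<delta>})"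
  then obtain k where k: "-int N \<le> k" "k < int N" "of_int k*\<delta> \<le> x" "x < (of_int k+1)*\<delta>" by auto
  have "-(real N) \<le> of_int k" using k(1) by linarith
  then have "-(real N)*\<delta> \<le> of_int k * \<delta>" using d by (intro mult_right_mono) auto
  moreover have "of_int k + 1 \<le> real N" using k(2) by linarith
  then have "(of_int k+1)*\<delta> \<le> real N * \<delta>" using d by (intro mult_right_mono) auto
  ultimately show "x \<in> {-(real N*\<delta>)..<real N*\<delta>}" using k by auto
next
  fix x assume x: "x \<in> {-(real N*\<delta>)..<real N*\<delta>}"
  define k where "k = \<lfloor>x/\<delta>\<rfloor>"
  have "-(real N) \<le> x/\<delta>" "x/\<delta> < real N" using x d by (auto simp: field_simps)
  then have "-int N \<le> k" "k < int N" unfolding k_def by linarith+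
  moreover have "of_int k \<le> x/\<delta>" "x/\<delta> < of_int k + 1" unfolding k_def by linarith+
  then have "of_int k*\<delta> \<le> x" "x < (of_int k+1)*\<delta>" using d by (auto simp: field_simps)
  ultimately show "x \<in> (\<Union>k\<in>{-int N..<int N}. {of_int k*\<delta>..<(of_int k+1)*\<delta>})" by auto
qed

lemma strips_disj:
  fixes \<delta> :: real
  assumes d: "0 < \<delta>"
  shows "disjoint_family_on (\<lambda>k::int. B \<inter> {of_int k*\<delta>..<(of_int k+1)*\<delta>}) K"
proof (unfold disjoint_family_on_def, intro ballI impI)
  fix k l :: int assume "k \<in> K" "l \<in> K" "k \<noteq> l"
  show "B \<inter> {of_int k*\<delta>..<(of_int k+1)*\<delta>} \<inter> (B \<inter> {of_int l*\<delta>..<(of_int l+1)*\<delta>}) = {}"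
  proof (rule ccontr)
    assume "\<not> ?thesis"
    then obtain x where "of_int k*\<delta> \<le> x" "x < (of_int k+1)*\<delta>" "of_int l*\<delta> \<le> x" "x < (of_int l+1)*\<delta>" by auto
    then have "of_int k*\<delta> < (of_int l+1)*\<delta>" "of_int l*\<delta> < (of_int k+1)*\<delta>" by auto
    then have "of_int k < (of_int l+1::real)" "of_int l < (of_int k+1::real)" using d
      by (meson mult_less_cancel_right_pos)+
    then have "k < l + 1" "l < k + 1" by linarith+
    then show False using \<open>k \<noteq> l\<close> by linarith
  qed
qed

theorem lemma9:
  fixes B :: "real set" and m \<delta> :: real and n :: nat
  assumes "B \<in> sets lebesgue"
    and "emeasure lebesgue B = ennreal m"
    and "0 < m"
    and "0 < \<delta>"
    and "real n * \<delta> < m"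
  shows "\<exists>x :: nat \<Rightarrow> real. (\<forall>i\<in>{1..n+1}. x i \<in> B) \<and>
           (\<forall>i\<in>{1..n+1}. \<forall>j\<in>{1..n+1}. i \<noteq> j \<longrightarrow>
              (\<exists>k::nat. k \<ge> 1 \<and> \<bar>x i - x j\<bar> / \<delta> = real k))"
proof -
  note B = assms(1) and d = assms(4)
  define A where "A N = B \<inter> {-(real N*\<delta>)..<real N*\<delta>}" for N :: nat
  have Am: "range A \<subseteq> sets lebesgue" unfolding A_def using B by auto
  have inc: "incseq A"
  proof (rule incseq_SucI)
    fix N show "A N \<subseteq> A (Suc N)" unfolding A_def using d
      by (auto simp: distrib_right)
  qed
  have UA: "(\<Union>N. A N) = B"
  proof (intro equalityI subsetI)
    fix x assume "x \<in> B"
    obtain N :: nat where "\<bar>x\<bar>/\<delta> < real N" using reals_Archimedean2 by blast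
    then have "\<bar>x\<bar> < real N * \<delta>" using d by (simp add: field_simps)
    then have "x \<in> A N" using \<open>x \<in> B\<close> unfolding A_def by auto
    then show "x \<in> (\<Union>N. A N)" by blast
  qed (auto simp: A_def)
  have "(\<lambda>N. emeasure lebesgue (A N)) \<longlonglongrightarrow> ennreal m"
    using Lim_emeasure_incseq[OF Am inc] UA assms(2) by simp
  moreover have "ennreal (real n * \<delta>) < ennreal m"
    using assms(3,5) by (simp add: ennreal_lessI)
  ultimately have "eventually (\<lambda>N. ennreal (real n * \<delta>) < emeasure lebesgue (A N)) sequentially"
    by (rule order_tendstoD)
  then obtain N where N: "ennreal (real n * \<delta>) < emeasure lebesgue (A N)"
    by (meson eventually_sequentially order_refl)
  let ?K = "{-int N..<int N}"
  have "emeasure lebesgue (A N) = emeasure lebesgue (\<Union>k\<in>?K. B \<inter> {of_int k*\<delta>..<(of_int k+1)*\<delta>})"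
    unfolding A_def by (simp only: strips_union[OF d, of N, symmetric] Int_UN_distrib)
  also have "\<dots> = (\<Sum>k\<in>?K. emeasure lebesgue (B \<inter> {of_int k*\<delta>..<(of_int k+1)*\<delta>}))"
    by (rule sum_emeasure[symmetric]) (use B strips_disj[OF d] in auto)
  finally have big: "(\<Sum>k\<in>?K. emeasure lebesgue (B \<inter> {of_int k*\<delta>..<(of_int k+1)*\<delta>})) > ennreal (real n * \<delta>)"
    using N by simp
  obtain y where y: "n + 1 \<le> card {k\<in>?K. of_int k*\<delta> + y \<in> B}"
    using pigeon[OF B d _ big] by auto
  obtain K' where K': "K' \<subseteq> {k\<in>?K. of_int k*\<delta> + y \<in> B}" "card K' = n + 1"
    using obtain_subset_with_card_n[OF y] by blast
  have fK': "finite K'" using K'(2) card.infinite by fastforce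
  obtain h where h: "bij_betw h {1..card K'} K'" using ex_bij_betw_nat_finite_1[OF fK'] by blast
  define x where "x i = of_int (h i) * \<delta> + y" for i
  show ?thesis
  proof (intro exI[of _ x] conjI ballI impI)
    fix i assume i: "i \<in> {1..n+1}"
    have "h ` {1..n+1} = K'" using bij_betw_imp_surj_on[OF h] K'(2) by simp
    then have "h i \<in> K'" using i by blast
    then show "x i \<in> B" using K'(1) unfolding x_def by auto
  next
    fix i j assume i: "i \<in> {1..n+1}" and j: "j \<in> {1..n+1}" and ij: "i \<noteq> j"
    have inj: "inj_on h {1..n+1}" using bij_betw_imp_inj_on[OF h] K'(2) by simp
    have "h i \<noteq> h j" using inj_onD[OF inj _ i j] ij by blast
    then have pos: "nat \<bar>h i - h j\<bar> \<ge> 1" by simp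
    have "x i - x j = of_int (h i - h j) * \<delta>" unfolding x_def by (simp add: algebra_simps)
    then have "\<bar>x i - x j\<bar> / \<delta> = \<bar>of_int (h i - h j)\<bar>" using d
      by (simp add: abs_mult)
    also have "\<dots> = real (nat \<bar>h i - h j\<bar>)" by simp
    finally show "\<exists>k::nat. k \<ge> 1 \<and> \<bar>x i - x j\<bar> / \<delta> = real k" using pos by blast
  qed
qed

end
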